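(* Let $n\ge3$ and $0<t\le s\le1$. There exist $\epsilon=\epsilon(s,n,K)\in(0,\tfrac12]$ and $\bar\delta_0=\bar\delta_0(\epsilon)\in(0,\tfrac12]$ such that the following holds for all $\delta\in(0,\bar\delta_0]$. Let $F\subset C^2([0,1]^{n-1},[0,1])$ be a finite $\delta$-separated cinematic family with cinematic constant $K$ which is a $(\delta,t,\delta^{-2\epsilon})$-set with $\tfrac12\delta^{2\epsilon-t}\le|F|\le\delta^{-t}$ and $\|f\|_{C^2([0,1]^{n-1})}\le K$ for all $f\in F$, and for each $f\in F$ let $E(f)\subset\mathrm{graph}(f)$ be a finite $\delta$-separated $(\delta,n-2+s,\delta^{-2\epsilon})$-set with $|E(f)|=M$, where $\delta^{2\epsilon-(n-2+s)}\le M\le\delta^{-(n-2+s)}$. Then for every $f\in F$, the projection $P_{E(f)}$ of $E(f)$ onto the first $n-1$ coordinates is a $(\delta,n-2+s,\delta^{-3\epsilon})$-set.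
   Context: $|A|$ is cardinality and $|A|_\delta$ the $\delta$-covering number. A bounded set $P$ in a metric space $X$ is a $(\delta,\sigma,C)$-set if $|P\cap B(x,r)|_\delta\le Cr^\sigma|P|_\delta$ for all $x\in X$, $r\ge\delta$; for subsets of $C^2([0,1]^{n-1},[0,1])$ the metric is the $C^2$-norm metric. Cinematic family: for a domain $U\subset\mathbb{R}^k$, $F\subset C^2(U)$ is a cinematic family with cinematic constant $K$, doubling constant $D$ and modulus of continuity $\alpha$ if: (1) $F$ lies in a ball of diameter $K$ in $C^2(U)$; (2) $F$ is doubling with constant at most $D$; (3) for all $f,g\in F$ and $\xi\in S^{k-1}$, $\inf_{x\in U}\{|f-g|(x)+|\nabla f-\nabla g|(x)+|\nabla_\xi\nabla_\xi(f-g)(x)|\}\ge K^{-1}\|f-g\|_{C^2(U)}$, with $\nabla_\xi\nabla_\xi h=\langle\nabla^2h\,\xi,\xi\rangle$; (4) there is an increasing continuous $\alpha:[0,1]\to[0,\infty)$, $\alpha(0)=0$, $0<\alpha(s)\le K^{-1}s$ for $s\in(0,1]$, such that for all $f,g\in F$, $\xi\in S^{k-1}$, sufficiently small $\eta>0$ and $x,y\in U$ with $|x-y|\le\alpha(\eta)$: $|\nabla_\xi\nabla_\xi(f-g)(x)-\nabla_\xi\nabla_\xi(f-g)(y)|\le\eta$. *)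

theory Defs
  imports "HOL-Analysis.Analysis"
begin

text \<open>Points of R^(n-1) are vectors real^'m with CARD('m) = n-1; points of R^n are pairs
  (x, y) :: real^'m \<times> real (Euclidean metric). The domain is the unit cube [0,1]^(n-1).\<close>

abbreviation ucube :: "(real^'m) set" where "ucube \<equiv> cbox 0 One"

definition is_C2_data :: "(real^'m) set \<Rightarrow> (real^'m \<Rightarrow> real) \<Rightarrow> (real^'m \<Rightarrow> real^'m)
    \<Rightarrow> (real^'m \<Rightarrow> real^'m^'m) \<Rightarrow> bool" where
  "is_C2_data U f g H \<longleftrightarrow>
     (\<forall>x\<in>U. (f has_derivative (\<lambda>h. g x \<bullet> h)) (at x within U) \<and>
             (g has_derivative (\<lambda>h. H x *v h)) (at x within U)) \<and> continuous_on U H"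

definition C2_on :: "(real^'m) set \<Rightarrow> (real^'m \<Rightarrow> real) \<Rightarrow> bool" where
  "C2_on U f \<longleftrightarrow> (\<exists>g H. is_C2_data U f g H)"

definition grad_on :: "(real^'m) set \<Rightarrow> (real^'m \<Rightarrow> real) \<Rightarrow> real^'m \<Rightarrow> real^'m" where
  "grad_on U f = fst (SOME gH. is_C2_data U f (fst gH) (snd gH))"

definition hess_on :: "(real^'m) set \<Rightarrow> (real^'m \<Rightarrow> real) \<Rightarrow> real^'m \<Rightarrow> real^'m^'m" where
  "hess_on U f = snd (SOME gH. is_C2_data U f (fst gH) (snd gH))"

definition C2_norm :: "(real^'m) set \<Rightarrow> (real^'m \<Rightarrow> real) \<Rightarrow> real" where
  "C2_norm U f = (SUP x\<in>U. \<bar>f x\<bar>) + (SUP x\<in>U. norm (grad_on U f x))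
                 + (SUP x\<in>U. onorm (\<lambda>h. hess_on U f x *v h))"

definition C2_dist :: "(real^'m) set \<Rightarrow> (real^'m \<Rightarrow> real) \<Rightarrow> (real^'m \<Rightarrow> real) \<Rightarrow> real" where
  "C2_dist U f g = C2_norm U (\<lambda>x. f x - g x)"

definition ddir :: "(real^'m) set \<Rightarrow> (real^'m \<Rightarrow> real) \<Rightarrow> real^'m \<Rightarrow> real^'m \<Rightarrow> real" where
  "ddir U h \<xi> x = (hess_on U h x *v \<xi>) \<bullet> \<xi>"

definition C2_unit :: "(real^'m \<Rightarrow> real) set" where
  "C2_unit = {f. C2_on ucube f \<and> (\<forall>x\<in>ucube. 0 \<le> f x \<and> f x \<le> 1)}"

definition graph_on :: "(real^'m) set \<Rightarrow> (real^'m \<Rightarrow> real) \<Rightarrow> ((real^'m) \<times> real) set" where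
  "graph_on U f = {(x, f x) | x. x \<in> U}"

definition cov_num :: "'a set \<Rightarrow> ('a \<Rightarrow> 'a \<Rightarrow> real) \<Rightarrow> 'a set \<Rightarrow> real \<Rightarrow> nat" where
  "cov_num X d A \<delta> = (LEAST N. \<exists>C. C \<subseteq> X \<and> finite C \<and> card C = N \<and> (\<forall>a\<in>A. \<exists>c\<in>C. d c a \<le> \<delta>))"

definition separated :: "('a \<Rightarrow> 'a \<Rightarrow> real) \<Rightarrow> real \<Rightarrow> 'a set \<Rightarrow> bool" where
  "separated d \<delta> A \<longleftrightarrow> (\<forall>a\<in>A. \<forall>b\<in>A. a \<noteq> b \<longrightarrow> \<delta> \<le> d a b)"

definition dsc_set :: "'a set \<Rightarrow> ('a \<Rightarrow> 'a \<Rightarrow> real) \<Rightarrow> real \<Rightarrow> real \<Rightarrow> real \<Rightarrow> 'a set \<Rightarrow> bool" where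
  "dsc_set X d \<delta> \<sigma> C P \<longleftrightarrow>
     (\<exists>x0\<in>X. \<exists>R. \<forall>p\<in>P. d x0 p \<le> R) \<and>
     (\<forall>x\<in>X. \<forall>r. \<delta> \<le> r \<longrightarrow>
        real (cov_num X d (P \<inter> {y. d x y \<le> r}) \<delta>) \<le> C * r powr \<sigma> * real (cov_num X d P \<delta>))"

definition doubling :: "('a \<Rightarrow> 'a \<Rightarrow> real) \<Rightarrow> 'a set \<Rightarrow> nat \<Rightarrow> bool" where
  "doubling d A D \<longleftrightarrow> (\<forall>x\<in>A. \<forall>r>0. \<exists>C\<subseteq>A. finite C \<and> card C \<le> D \<and>
      (\<forall>y\<in>A. d x y \<le> r \<longrightarrow> (\<exists>c\<in>C. d c y \<le> r / 2)))"

definition cinematic :: "(real^'m) set \<Rightarrow> (real^'m \<Rightarrow> real) set \<Rightarrow> real \<Rightarrow> nat \<Rightarrow> (real \<Rightarrow> real) \<Rightarrow> bool" where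
  "cinematic U F K D \<alpha> \<longleftrightarrow>
     (\<forall>f\<in>F. C2_on U f) \<and>
     (\<exists>h. C2_on U h \<and> (\<forall>f\<in>F. C2_dist U f h \<le> K / 2)) \<and>
     doubling (C2_dist U) F D \<and>
     (\<forall>f\<in>F. \<forall>g\<in>F. \<forall>\<xi>::real^'m. norm \<xi> = 1 \<longrightarrow>
        (\<forall>x\<in>U. C2_dist U f g / K \<le> \<bar>f x - g x\<bar> + norm (grad_on U (\<lambda>y. f y - g y) x)
                                     + \<bar>ddir U (\<lambda>y. f y - g y) \<xi> x\<bar>)) \<and>
     continuous_on {0..1} \<alpha> \<and> mono_on {0..1} \<alpha> \<and> \<alpha> 0 = 0 \<and>
     (\<forall>s. 0 < s \<and> s \<le> 1 \<longrightarrow> 0 < \<alpha> s \<and> \<alpha> s \<le> s / K) \<and>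
     (\<forall>f\<in>F. \<forall>g\<in>F. \<forall>\<xi>::real^'m. norm \<xi> = 1 \<longrightarrow>
        (\<exists>\<eta>0>0. \<forall>\<eta>. 0 < \<eta> \<and> \<eta> \<le> \<eta>0 \<longrightarrow>
           (\<forall>x\<in>U. \<forall>y\<in>U. dist x y \<le> \<alpha> \<eta> \<longrightarrow>
              \<bar>ddir U (\<lambda>z. f z - g z) \<xi> x - ddir U (\<lambda>z. f z - g z) \<xi> y\<bar> \<le> \<eta>)))"

end

theory Submission imports Defs "HOL-Library.FuncSet" begin

lemma lip_of_C2:
  fixes g :: "real^'m \<Rightarrow> real"
  assumes C2: "C2_on ucube g" and N: "C2_norm ucube g \<le> K"
    and p: "p \<in> ucube" and q: "q \<in> ucube"
  shows "\<bar>g p - g q\<bar> \<le> K * dist p q"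
proof -
  obtain gr H where "is_C2_data ucube g gr H" using C2 unfolding C2_on_def by blast
  then have ex: "\<exists>gH. is_C2_data ucube g (fst gH) (snd gH)" by (intro exI[of _ "(gr,H)"]) simp
  define G where "G = grad_on ucube g"
  define Hs where "Hs = hess_on ucube g"
  have D: "is_C2_data ucube g G Hs"
    unfolding G_def Hs_def grad_on_def hess_on_def using someI_ex[OF ex] .
  have dg: "\<And>x. x \<in> ucube \<Longrightarrow> (g has_derivative (\<lambda>h. G x \<bullet> h)) (at x within ucube)"
    and dG: "\<And>x. x \<in> ucube \<Longrightarrow> (G has_derivative (\<lambda>h. Hs x *v h)) (at x within ucube)"
    and cH: "continuous_on ucube Hs"
    using D unfolding is_C2_data_def by auto
  have cg: "continuous_on ucube g" by (rule has_derivative_continuous_on[OF dg])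
  have cG: "continuous_on ucube G" by (rule has_derivative_continuous_on[OF dG])
  have cpt: "compact (ucube :: (real^'m) set)" by simp
  have b1: "bdd_above ((\<lambda>x. \<bar>g x\<bar>) ` ucube)"
    by (intro bounded_imp_bdd_above compact_imp_bounded compact_continuous_image cpt continuous_intros cg)
  have b2: "bdd_above ((\<lambda>x. norm (G x)) ` ucube)"
    by (intro bounded_imp_bdd_above compact_imp_bounded compact_continuous_image cpt continuous_intros cG)
  have b3': "bdd_above ((\<lambda>x. (\<Sum>i\<in>UNIV. \<Sum>j\<in>UNIV. \<bar>Hs x $ i $ j\<bar>)) ` ucube)"
    by (intro bounded_imp_bdd_above compact_imp_bounded compact_continuous_image cpt continuous_intros cH)
  then obtain B where B: "\<And>x. x \<in> ucube \<Longrightarrow> (\<Sum>i\<in>UNIV. \<Sum>j\<in>UNIV. \<bar>Hs x $ i $ j\<bar>) \<le> B"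
    by (auto simp: bdd_above_def)
  have b3: "bdd_above ((\<lambda>x. onorm (\<lambda>h. Hs x *v h)) ` ucube)"
    unfolding bdd_above_def
    by (rule exI[of _ B]) (auto intro: order_trans[OF onorm_le_matrix_component_sum B])
  have z: "(0::real^'m) \<in> ucube" by (auto simp: mem_box)
  have s1: "0 \<le> (SUP x\<in>ucube. \<bar>g x\<bar>)"
    by (rule order_trans[OF _ cSUP_upper[OF z b1]]) simp
  have s3: "0 \<le> (SUP x\<in>ucube. onorm (\<lambda>h. Hs x *v h))"
    by (rule order_trans[OF _ cSUP_upper[OF z b3]]) (rule onorm_pos_le, simp)
  have nG: "norm (G x) \<le> K" if "x \<in> ucube" for x
  proof -
    have "norm (G x) \<le> (SUP x\<in>ucube. norm (G x))" by (rule cSUP_upper[OF that b2])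
    also have "\<dots> \<le> K" using N s1 s3 unfolding C2_norm_def G_def Hs_def by linarith
    finally show ?thesis .
  qed
  have on: "onorm (\<lambda>h. G x \<bullet> h) \<le> K" if "x \<in> ucube" for x
  proof -
    have "onorm (\<lambda>h. G x \<bullet> h) \<le> norm (G x)"
      by (rule onorm_bound) (simp, metis Cauchy_Schwarz_ineq2 mult.commute real_norm_def)
    then show ?thesis using nG[OF that] by linarith
  qed
  have "norm (g p - g q) \<le> K * norm (p - q)"
    by (rule differentiable_bound[OF convex_box(1) dg on p q])
  then show ?thesis by (simp add: dist_norm)
qed

lemma cov_le:
  assumes "C \<subseteq> X" "finite C" "\<forall>a\<in>A. \<exists>c\<in>C. d c a \<le> \<delta>"
  shows "cov_num X d A \<delta> \<le> card C"
  unfolding cov_num_def by (rule Least_le) (use assms in blast)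

lemma cov_ex:
  assumes "C \<subseteq> X" "finite C" "\<forall>a\<in>A. \<exists>c\<in>C. d c a \<le> \<delta>"
  shows "\<exists>C'. C' \<subseteq> X \<and> finite C' \<and> card C' = cov_num X d A \<delta> \<and> (\<forall>a\<in>A. \<exists>c\<in>C'. d c a \<le> \<delta>)"
proof -
  have "\<exists>N C. C \<subseteq> X \<and> finite C \<and> card C = N \<and> (\<forall>a\<in>A. \<exists>c\<in>C. d c a \<le> \<delta>)" using assms by blast
  from LeastI_ex[OF this] show ?thesis unfolding cov_num_def by blast
qed

lemma cov_proj:
  fixes B :: "('a::metric_space \<times> 'b::metric_space) set"
  assumes "finite B" "0 \<le> \<delta>" "A \<subseteq> fst ` B"
  shows "cov_num UNIV dist A \<delta> \<le> cov_num UNIV dist B \<delta>"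
proof -
  have "\<forall>a\<in>B. \<exists>c\<in>B. dist c a \<le> \<delta>"
  proof
    fix a assume "a \<in> B" then show "\<exists>c\<in>B. dist c a \<le> \<delta>" using assms(2) by (intro bexI[of _ a]) auto
  qed
  from cov_ex[OF _ assms(1) this] obtain C where C: "finite C" "card C = cov_num UNIV dist B \<delta>"
    "\<forall>a\<in>B. \<exists>c\<in>C. dist c a \<le> \<delta>" by blast
  have "\<forall>a\<in>A. \<exists>c\<in>fst ` C. dist c a \<le> \<delta>"
  proof
    fix a assume "a \<in> A"
    then obtain b where b: "b \<in> B" "a = fst b" using assms(3) by blast
    then obtain c where "c \<in> C" "dist c b \<le> \<delta>" using C(3) by blast
    then show "\<exists>c\<in>fst ` C. dist c a \<le> \<delta>" using b dist_fst_le[of c b] by force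
  qed
  then have "cov_num UNIV dist A \<delta> \<le> card (fst ` C)" by (intro cov_le) (use C in auto)
  also have "\<dots> \<le> card C" by (rule card_image_le[OF C(1)])
  finally show ?thesis using C(2) by simp
qed

lemma packing:
  fixes g :: "real^'m \<Rightarrow> real" and E :: "((real^'m) \<times> real) set"
  assumes Lip: "\<And>p q. p \<in> ucube \<Longrightarrow> q \<in> ucube \<Longrightarrow> \<bar>g p - g q\<bar> \<le> K * dist p q"
    and K: "0 \<le> K" and EG: "E \<subseteq> graph_on ucube g" and fE: "finite E"
    and sep: "separated dist \<delta> E" and d: "0 < \<delta>"
  shows "card E \<le> cov_num UNIV dist (fst ` E) \<delta> * nat (2 * ceiling (real CARD('m) * (1+K)) + 1) ^ CARD('m)"
proof -
  define L where "L = ceiling (real CARD('m) * (1+K))"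
  define h where "h = \<delta> / (real CARD('m) * (1+K))"
  have h: "0 < h" using d K by (simp add: h_def)
  have "\<forall>a\<in>fst ` E. \<exists>c\<in>fst ` E. dist c a \<le> \<delta>"
  proof
    fix a assume "a \<in> fst ` E" then show "\<exists>c\<in>fst ` E. dist c a \<le> \<delta>" using d by (intro bexI[of _ a]) auto
  qed
  from cov_ex[OF _ finite_imageI[OF fE] this] obtain C where C: "finite C"
    "card C = cov_num UNIV dist (fst ` E) \<delta>" "\<forall>a\<in>fst ` E. \<exists>c\<in>C. dist c a \<le> \<delta>" by blast
  define ch where "ch e = (SOME c. c \<in> C \<and> dist c (fst e) \<le> \<delta>)" for e :: "(real^'m) \<times> real"
  have ch: "ch e \<in> C \<and> dist (ch e) (fst e) \<le> \<delta>" if "e \<in> E" for e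
    unfolding ch_def by (rule someI_ex) (use C(3) that in blast)
  define \<phi> where "\<phi> e = (ch e, \<lambda>i. floor ((fst e $ i - ch e $ i) / h))" for e
  have inj: "inj_on \<phi> E"
  proof (rule inj_onI)
    fix e e' assume e: "e \<in> E" and e': "e' \<in> E" and eq: "\<phi> e = \<phi> e'"
    define c where "c = ch e"
    have cc: "ch e' = c" using eq by (simp add: \<phi>_def c_def)
    have fl: "floor ((fst e $ i - c $ i) / h) = floor ((fst e' $ i - c $ i) / h)" for i
      using eq cc by (simp add: \<phi>_def c_def fun_eq_iff)
    have ci: "\<bar>fst e $ i - fst e' $ i\<bar> < h" for i
    proof -
      have "\<bar>(fst e $ i - c $ i) / h - (fst e' $ i - c $ i) / h\<bar> < 1"
        using fl[of i] by linarith
      then have "\<bar>(fst e $ i - fst e' $ i) / h\<bar> < 1" by (simp add: diff_divide_distrib)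
      then show ?thesis using h by (simp add: abs_divide divide_less_eq)
    qed
    have "norm (fst e - fst e') \<le> (\<Sum>i\<in>UNIV. \<bar>(fst e - fst e') $ i\<bar>)" by (rule norm_le_l1_cart)
    also have "\<dots> < (\<Sum>i\<in>(UNIV::'m set). h)" by (rule sum_strict_mono) (use ci in auto)
    also have "\<dots> = \<delta> / (1+K)" using K by (simp add: h_def)
    finally have nd: "dist (fst e) (fst e') < \<delta> / (1+K)" by (simp add: dist_norm)
    obtain p where p: "p \<in> ucube" "e = (p, g p)" using EG e unfolding graph_on_def by blast
    obtain p' where p': "p' \<in> ucube" "e' = (p', g p')" using EG e' unfolding graph_on_def by blast
    have "dist e e' \<le> dist p p' + dist (g p) (g p')"
      using norm_Pair_le[of "p - p'" "g p - g p'"] by (simp add: p p' dist_norm)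
    also have "\<dots> \<le> (1+K) * dist p p'" using Lip[OF p(1) p'(1)] by (simp add: dist_real_def algebra_simps)
    also have "\<dots> < (1+K) * (\<delta> / (1+K))" using nd p p' K by (intro mult_strict_left_mono) auto
    also have "\<dots> = \<delta>" using K by simp
    finally have lt: "dist e e' < \<delta>" .
    show "e = e'"
    proof (rule ccontr)
      assume "e \<noteq> e'"
      then have "\<delta> \<le> dist e e'" using sep e e' unfolding separated_def by blast
      with lt show False by simp
    qed
  qed
  have img: "\<phi> ` E \<subseteq> C \<times> (PiE UNIV (\<lambda>i. {-L..L}))"
  proof
    fix x assume "x \<in> \<phi> ` E"
    then obtain e where e: "e \<in> E" "x = \<phi> e" by blast
    have "floor ((fst e $ i - ch e $ i) / h) \<in> {-L..L}" for i
    proof -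
      have a: "\<bar>fst e $ i - ch e $ i\<bar> \<le> \<delta>"
        using ch[OF e(1)] component_le_norm_cart[of "fst e - ch e" i] by (simp add: dist_norm norm_minus_commute)
      have "\<bar>(fst e $ i - ch e $ i) / h\<bar> \<le> \<delta> / h" using a h by (simp add: abs_divide divide_right_mono)
      also have "\<delta> / h = real CARD('m) * (1+K)" using d K by (simp add: h_def)
      also have "\<dots> \<le> L" unfolding L_def by (rule le_of_int_ceiling)
      finally have ab: "\<bar>(fst e $ i - ch e $ i) / h\<bar> \<le> of_int L" .
      have "- of_int L \<le> (fst e $ i - ch e $ i) / h" "(fst e $ i - ch e $ i) / h \<le> of_int L"
        using abs_le_iff[THEN iffD1, OF ab] by linarith+
      then have "- L \<le> floor ((fst e $ i - ch e $ i) / h)" "floor ((fst e $ i - ch e $ i) / h) \<le> L"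
        by (simp_all add: le_floor_iff floor_le_iff)
      then show ?thesis by simp
    qed
    then show "x \<in> C \<times> (PiE UNIV (\<lambda>i. {-L..L}))" using e ch[OF e(1)] by (auto simp: \<phi>_def)
  qed
  have "card E = card (\<phi> ` E)" by (rule card_image[OF inj, symmetric])
  also have "\<dots> \<le> card (C \<times> (PiE UNIV (\<lambda>i::'m. {-L..L})))"
    by (rule card_mono[OF _ img]) (use C(1) in \<open>auto intro!: finite_PiE\<close>)
  also have "\<dots> = card C * nat (2 * L + 1) ^ CARD('m)"
    by (simp add: card_cartesian_product card_PiE)
  finally show ?thesis using C(2) by (simp add: L_def)
qed

theorem lemma4p2:
  fixes s K :: real
  assumes "CARD('m) \<ge> 2" and "0 < s" and "s \<le> 1" and "0 < K"
  shows "\<exists>\<epsilon>. 0 < \<epsilon> \<and> \<epsilon> \<le> 1/2 \<and> (\<exists>\<delta>0. 0 < \<delta>0 \<and> \<delta>0 \<le> 1/2 \<and>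
    (\<forall>t \<delta> (F :: (real^'m \<Rightarrow> real) set) D \<alpha> (E :: (real^'m \<Rightarrow> real) \<Rightarrow> ((real^'m) \<times> real) set) (M :: nat) f.
       0 < t \<longrightarrow> t \<le> s \<longrightarrow> 0 < \<delta> \<longrightarrow> \<delta> \<le> \<delta>0 \<longrightarrow>
       finite F \<longrightarrow> F \<subseteq> C2_unit \<longrightarrow> separated (C2_dist ucube) \<delta> F \<longrightarrow>
       cinematic ucube F K D \<alpha> \<longrightarrow>
       dsc_set C2_unit (C2_dist ucube) \<delta> t (\<delta> powr (-2*\<epsilon>)) F \<longrightarrow>
       1/2 * \<delta> powr (2*\<epsilon> - t) \<le> real (card F) \<longrightarrow> real (card F) \<le> \<delta> powr (-t) \<longrightarrow>
       (\<forall>g\<in>F. C2_norm ucube g \<le> K) \<longrightarrow>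
       \<delta> powr (2*\<epsilon> - (real CARD('m) - 1 + s)) \<le> real M \<longrightarrow>
       real M \<le> \<delta> powr (-(real CARD('m) - 1 + s)) \<longrightarrow>
       (\<forall>g\<in>F. finite (E g) \<and> E g \<subseteq> graph_on ucube g \<and> separated dist \<delta> (E g) \<and>
              dsc_set UNIV dist \<delta> (real CARD('m) - 1 + s) (\<delta> powr (-2*\<epsilon>)) (E g) \<and>
              card (E g) = M) \<longrightarrow>
       f \<in> F \<longrightarrow>
       dsc_set UNIV dist \<delta> (real CARD('m) - 1 + s) (\<delta> powr (-3*\<epsilon>)) (fst ` E f)))"
proof -
  define m where "m = CARD('m)"
  define A where "A = 2 * (1 + K)"
  define C1n where "C1n = nat (2 * ceiling (real CARD('m) * (1+K)) + 1) ^ CARD('m)"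
  define Ct where "Ct = A ^ m * real C1n"
  have A1: "1 \<le> A" using assms by (simp add: A_def)
  have "0 \<le> real CARD('m) * (1+K)" using assms by (intro mult_nonneg_nonneg) auto
  then have "0 \<le> ceiling (real CARD('m) * (1+K))" by simp
  then have "1 \<le> nat (2 * ceiling (real CARD('m) * (1+K)) + 1)" by linarith
  then have C1n1: "1 \<le> C1n" unfolding C1n_def by (rule one_le_power)
  have Am: "1 \<le> A ^ m" by (rule one_le_power[OF A1])
  have "1 \<le> real C1n" using C1n1 by simp
  then have "1 * 1 \<le> A ^ m * real C1n" using Am by (intro mult_mono) auto
  then have Ct1: "1 \<le> Ct" unfolding Ct_def by simp
  define d0 where "d0 = min (1/2) (1 / Ct^2)"
  have d0: "0 < d0" "d0 \<le> 1/2" using Ct1 by (auto simp: d0_def)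
  show ?thesis
  proof (rule exI[of _ "1/2"], intro conjI, simp, simp, rule exI[of _ d0], intro conjI d0 allI impI)
    fix t :: real and \<delta> and F :: "(real^'m \<Rightarrow> real) set" and D :: nat and \<alpha> :: "real \<Rightarrow> real"
      and E :: "(real^'m \<Rightarrow> real) \<Rightarrow> ((real^'m) \<times> real) set" and M :: nat and f
    assume t: "0 < t" and \<delta>: "0 < \<delta>" "\<delta> \<le> d0" and FC: "F \<subseteq> C2_unit"
      and Fn: "\<forall>g\<in>F. C2_norm ucube g \<le> K"
      and EH: "\<forall>g\<in>F. finite (E g) \<and> E g \<subseteq> graph_on ucube g \<and> separated dist \<delta> (E g) \<and>
              dsc_set UNIV dist \<delta> (real CARD('m) - 1 + s) (\<delta> powr (-2*(1/2))) (E g) \<and>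
              card (E g) = M"
      and fF: "f \<in> F"
    define \<sigma> where "\<sigma> = real CARD('m) - 1 + s"
    define P where "P = fst ` E f"
    have C2f: "C2_on ucube f" using FC fF by (auto simp: C2_unit_def)
    have Lip: "\<And>p q. p \<in> ucube \<Longrightarrow> q \<in> ucube \<Longrightarrow> \<bar>f p - f q\<bar> \<le> K * dist p q"
      by (rule lip_of_C2[OF C2f]) (use Fn fF in auto)
    have fE: "finite (E f)" and EG: "E f \<subseteq> graph_on ucube f" and sep: "separated dist \<delta> (E f)"
      and dE: "dsc_set UNIV dist \<delta> \<sigma> (\<delta> powr (-2*(1/2))) (E f)" and cE: "card (E f) = M"
      using EH fF by (auto simp: \<sigma>_def)
    have pack: "M \<le> cov_num UNIV dist P \<delta> * C1n"
      using packing[OF Lip _ EG fE sep \<delta>(1)] assms cE by (simp add: P_def C1n_def)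
    have covE: "cov_num UNIV dist (E f) \<delta> \<le> M"
    proof -
      have "\<forall>a\<in>E f. \<exists>c\<in>E f. dist c a \<le> \<delta>"
      proof
        fix a assume "a \<in> E f" then show "\<exists>c\<in>E f. dist c a \<le> \<delta>" using \<delta> by (intro bexI[of _ a]) auto
      qed
      then show ?thesis using cov_le[of "E f" UNIV] fE cE by auto
    qed
    have covEP: "real (cov_num UNIV dist (E f) \<delta>) \<le> real C1n * real (cov_num UNIV dist P \<delta>)"
    proof -
      have "cov_num UNIV dist (E f) \<delta> \<le> cov_num UNIV dist P \<delta> * C1n" using covE pack by linarith
      then have "real (cov_num UNIV dist (E f) \<delta>) \<le> real (cov_num UNIV dist P \<delta> * C1n)"
        by (simp only: of_nat_le_iff)
      then show ?thesis by (simp add: mult.commute)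
    qed
    have Ctd: "Ct \<le> \<delta> powr (-1/2)"
    proof -
      have "\<delta> \<le> 1 / Ct^2" using \<delta> by (simp add: d0_def)
      then have "sqrt \<delta> \<le> sqrt (1 / Ct^2)" by simp
      also have "\<dots> = 1 / Ct" using Ct1 by (simp add: real_sqrt_divide)
      finally have "sqrt \<delta> \<le> 1 / Ct" .
      then have "Ct \<le> 1 / sqrt \<delta>" using Ct1 \<delta> by (simp add: field_simps)
      also have "1 / sqrt \<delta> = \<delta> powr (-1/2)"
        using \<delta> by (simp add: powr_minus_divide powr_half_sqrt[symmetric])
      finally show ?thesis .
    qed
    have \<sigma>m: "\<sigma> \<le> real m" using assms by (simp add: \<sigma>_def m_def)
    have bnd: "\<exists>x0\<in>UNIV. \<exists>R. \<forall>p\<in>P. dist x0 p \<le> R"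
    proof -
      have "bounded P" unfolding P_def using fE by (intro finite_imp_bounded) auto
      then show ?thesis unfolding bounded_def by blast
    qed
    have main: "real (cov_num UNIV dist (P \<inter> {y. dist x y \<le> r}) \<delta>)
        \<le> \<delta> powr (-3*(1/2)) * r powr \<sigma> * real (cov_num UNIV dist P \<delta>)" if r: "\<delta> \<le> r" for x r
    proof (cases "P \<inter> {y. dist x y \<le> r} = {}")
      case True
      then have "cov_num UNIV dist (P \<inter> {y. dist x y \<le> r}) \<delta> = 0"
        using cov_le[of "{}" UNIV "P \<inter> {y. dist x y \<le> r}" dist \<delta>] by simp
      then show ?thesis by simp
    next
      case False
      then obtain e0 where e0: "e0 \<in> E f" "dist x (fst e0) \<le> r" unfolding P_def by auto
      obtain p0 where p0: "p0 \<in> ucube" "e0 = (p0, f p0)" using EG e0 unfolding graph_on_def by blast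
      define \<rho> where "\<rho> = A * r"
      have "r * 1 \<le> r * A" using A1 r \<delta> by (intro mult_left_mono) auto
      then have \<rho>: "\<delta> \<le> \<rho>" using r unfolding \<rho>_def by (simp add: mult.commute)
      have sub: "P \<inter> {y. dist x y \<le> r} \<subseteq> fst ` (E f \<inter> {y. dist e0 y \<le> \<rho>})"
      proof
        fix y assume y: "y \<in> P \<inter> {y. dist x y \<le> r}"
        then obtain e where e: "e \<in> E f" "y = fst e" unfolding P_def by auto
        obtain p where p: "p \<in> ucube" "e = (p, f p)" using EG e unfolding graph_on_def by blast
        have dp: "dist p0 p \<le> 2 * r"
          using dist_triangle[of p0 p x] e0 y e p p0 by (simp add: dist_commute)
        have "dist e0 e \<le> dist p0 p + dist (f p0) (f p)"
          using norm_Pair_le[of "p0 - p" "f p0 - f p"] by (simp add: p p0 dist_norm)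
        also have "\<dots> \<le> (1+K) * dist p0 p" using Lip[OF p0(1) p(1)] by (simp add: dist_real_def algebra_simps)
        also have "\<dots> \<le> (1+K) * (2 * r)" using dp assms by (intro mult_left_mono) auto
        finally have "dist e0 e \<le> \<rho>" by (simp add: \<rho>_def A_def algebra_simps)
        then show "y \<in> fst ` (E f \<inter> {y. dist e0 y \<le> \<rho>})" using e by auto
      qed
      have c1: "cov_num UNIV dist (P \<inter> {y. dist x y \<le> r}) \<delta> \<le> cov_num UNIV dist (E f \<inter> {y. dist e0 y \<le> \<rho>}) \<delta>"
        by (rule cov_proj[OF _ _ sub]) (use fE \<delta> in auto)
      have c2: "real (cov_num UNIV dist (E f \<inter> {y. dist e0 y \<le> \<rho>}) \<delta>)
          \<le> \<delta> powr (-2*(1/2)) * \<rho> powr \<sigma> * real (cov_num UNIV dist (E f) \<delta>)"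
        by (rule dE[unfolded dsc_set_def, THEN conjunct2, rule_format, OF UNIV_I \<rho>])
      have rp: "\<rho> powr \<sigma> \<le> A ^ m * r powr \<sigma>"
      proof -
        have "\<rho> powr \<sigma> = A powr \<sigma> * r powr \<sigma>" unfolding \<rho>_def using A1 r \<delta>
          by (simp add: powr_mult)
        also have "A powr \<sigma> \<le> A powr real m" using A1 \<sigma>m by (intro powr_mono) auto
        also have "A powr real m = A ^ m" using A1 by (simp add: powr_realpow)
        finally show ?thesis by (simp add: mult_right_mono)
      qed
      define N where "N = real (cov_num UNIV dist P \<delta>)"
      have N0: "0 \<le> N" by (simp add: N_def)
      have "real (cov_num UNIV dist (P \<inter> {y. dist x y \<le> r}) \<delta>)
          \<le> \<delta> powr (-1) * \<rho> powr \<sigma> * real (cov_num UNIV dist (E f) \<delta>)"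
        using c1 c2 by (simp add: order_trans)
      also have "\<dots> \<le> \<delta> powr (-1) * (A ^ m * r powr \<sigma>) * (real C1n * N)"
        using rp covEP Am by (intro mult_mono) (auto simp: N_def)
      also have "\<dots> = \<delta> powr (-1) * Ct * (r powr \<sigma> * N)" by (simp add: Ct_def)
      also have "\<dots> \<le> \<delta> powr (-1) * \<delta> powr (-1/2) * (r powr \<sigma> * N)"
        using Ctd N0 by (intro mult_right_mono mult_left_mono) auto
      also have "\<delta> powr (-1) * \<delta> powr (-1/2) = \<delta> powr (-3*(1/2))"
      proof -
        have "\<delta> powr (-3*(1/2)) = \<delta> powr (-1 + -1/2)" by simp
        also have "\<dots> = \<delta> powr (-1) * \<delta> powr (-1/2)" by (rule powr_add)
        finally show ?thesis by simp
      qed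
      finally show ?thesis by (simp add: N_def mult.assoc)
    qed
    show "dsc_set UNIV dist \<delta> (real CARD('m) - 1 + s) (\<delta> powr (-3*(1/2))) (fst ` E f)"
      unfolding dsc_set_def using bnd main by (auto simp: P_def \<sigma>_def)
  qed
qed

end
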